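(* In the setting of the context (with $d_i^\pm>0$ for all $i$), let $s=\min_{i\in[k]}n_i/n$. Then $$\lambda_{\max}(C^+)\le\tau^-+\frac{n\eta}{n(s(1-2\eta)+\eta)-(1-\eta)},\qquad\lambda_{\min}(C^-)\ge\tau^+,$$ and consequently $$\|(C^-)^{-1/2}C^+(C^-)^{-1/2}\|\le\frac{\lambda_{\max}(C^+)}{\lambda_{\min}(C^-)}\le\frac{\tau^-+\frac{n\eta}{n(s(1-2\eta)+\eta)-(1-\eta)}}{\tau^+}.$$
   Context: SSBM with $n$ nodes, $k\ge2$ clusters $C_1,\dots,C_k$ of sizes $n_1,\dots,n_k$, edge probability $p\in(0,1]$ and sign-flip probability $\eta\in[0,1/2)$ (edges present independently w.p. $p$, signed $+1$ within and $-1$ across clusters, signs flipped independently w.p. $\eta$). Parameters $\tau^+>0$, $\tau^-\ge0$. Expected positive/negative degrees of a node in $C_i$: $d_i^+=p(n_i(1-2\eta)+n\eta-(1-\eta))$, $d_i^-=p(n(1-\eta)-n_i(1-2\eta)-\eta)$. $u^\pm=(\sqrt{n_i/d_i^\pm})_{i\in[k]}$. $C^+=-p\eta u^+(u^+)^\top+\mathrm{diag}_i\big(1+\tau^-+\frac p{d_i^+}(1-\eta-n_i(1-2\eta))\big)$, $C^-=-p(1-\eta)u^-(u^-)^\top+\mathrm{diag}_i\big(1+\tau^++\frac p{d_i^-}(\eta+n_i(1-2\eta))\big)$. *)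

theory Defs
  imports "HOL-Analysis.Analysis"
begin

definition eigvals :: "real^'k^'k \<Rightarrow> real set" where
  "eigvals A = {l. \<exists>v. v \<noteq> 0 \<and> A *v v = l *\<^sub>R v}"

definition lambda_max :: "real^'k^'k \<Rightarrow> real" where
  "lambda_max A = Max (eigvals A)"

definition lambda_min :: "real^'k^'k \<Rightarrow> real" where
  "lambda_min A = Min (eigvals A)"

definition pd_sqrt :: "real^'k^'k \<Rightarrow> real^'k^'k" where
  "pd_sqrt A = (THE S. transpose S = S \<and> (\<forall>l\<in>eigvals S. l > 0) \<and> S ** S = A)"

definition inv_sqrt :: "real^'k^'k \<Rightarrow> real^'k^'k" where
  "inv_sqrt A = matrix_inv (pd_sqrt A)"

definition spec_norm :: "real^'k^'k \<Rightarrow> real" where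
  "spec_norm M = onorm (\<lambda>x. M *v x)"

definition dplus :: "nat \<Rightarrow> real \<Rightarrow> real \<Rightarrow> nat \<Rightarrow> real" where
  "dplus n p \<eta> ni = p * (real ni * (1 - 2*\<eta>) + real n * \<eta> - (1 - \<eta>))"

definition dminus :: "nat \<Rightarrow> real \<Rightarrow> real \<Rightarrow> nat \<Rightarrow> real" where
  "dminus n p \<eta> ni = p * (real n * (1 - \<eta>) - real ni * (1 - 2*\<eta>) - \<eta>)"

definition Cplus :: "('k::finite \<Rightarrow> nat) \<Rightarrow> real \<Rightarrow> real \<Rightarrow> real \<Rightarrow> real^'k^'k" where
  "Cplus ns p \<eta> \<tau>m = (let n = (\<Sum>i\<in>UNIV. ns i); d = (\<lambda>i. dplus n p \<eta> (ns i));
      u = (\<lambda>i. sqrt (real (ns i) / d i)) in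
     (\<chi> i j. - p * \<eta> * u i * u j +
        (if i = j then 1 + \<tau>m + p / d i * (1 - \<eta> - real (ns i) * (1 - 2*\<eta>)) else 0)))"

definition Cminus :: "('k::finite \<Rightarrow> nat) \<Rightarrow> real \<Rightarrow> real \<Rightarrow> real \<Rightarrow> real^'k^'k" where
  "Cminus ns p \<eta> \<tau>p = (let n = (\<Sum>i\<in>UNIV. ns i); d = (\<lambda>i. dminus n p \<eta> (ns i));
      u = (\<lambda>i. sqrt (real (ns i) / d i)) in
     (\<chi> i j. - p * (1 - \<eta>) * u i * u j +
        (if i = j then 1 + \<tau>p + p / d i * (\<eta> + real (ns i) * (1 - 2*\<eta>)) else 0)))"

end

theory Submission
  imports Defs
begin

lemma sym_inner:
  fixes A :: "real^'n^'n"
  assumes "transpose A = A"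
  shows "x \<bullet> (A *v y) = (A *v x) \<bullet> y"
proof -
  have "x \<bullet> (A *v y) = (x v* A) \<bullet> y" by (simp add: dot_lmul_matrix)
  also have "x v* A = transpose A *v x" by simp
  finally show ?thesis using assms by simp
qed

lemma sym_of_inner:
  fixes M :: "real^'n^'n"
  assumes "\<And>x y. (M *v x) \<bullet> y = x \<bullet> (M *v y)"
  shows "transpose M = M"
proof -
  have "transpose M *v x = M *v x" for x
  proof -
    have "(transpose M *v x - M *v x) \<bullet> y = 0" for y
      using assms[of x y] by (simp add: inner_diff_left dot_lmul_matrix)
    from this[of "transpose M *v x - M *v x"] show ?thesis by simp
  qed
  then show ?thesis by (simp add: matrix_eq)
qed

definition onb :: "(real^'n) set \<Rightarrow> bool" where
  "onb B \<longleftrightarrow> finite B \<and> pairwise orthogonal B \<and> (\<forall>b\<in>B. norm b = 1) \<and> span B = UNIV"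

lemma onb_inner:
  assumes "onb B" "b \<in> B" "c \<in> B"
  shows "b \<bullet> c = (if b = c then 1 else 0)"
  using assms by (auto simp: onb_def norm_eq_1 orthogonal_def pairwise_def)

lemma onb_expand:
  assumes "onb B"
  shows "(\<Sum>b\<in>B. (x \<bullet> b) *\<^sub>R b) = x"
  using assms orthonormal_basis_expand[of B x] by (auto simp: onb_def)

lemma onb_parseval:
  assumes "onb B"
  shows "x \<bullet> y = (\<Sum>b\<in>B. (x \<bullet> b) * (y \<bullet> b))"
proof -
  have "x \<bullet> y = (\<Sum>b\<in>B. (x \<bullet> b) *\<^sub>R b) \<bullet> y" using onb_expand[OF assms] by simp
  also have "\<dots> = (\<Sum>b\<in>B. (x \<bullet> b) * (y \<bullet> b))"
    by (simp add: inner_sum_left mult.commute inner_commute[of y])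
  finally show ?thesis .
qed

lemma onb_vec_eq:
  assumes "onb B" "\<And>c. c \<in> B \<Longrightarrow> x \<bullet> c = y \<bullet> c"
  shows "x = y"
proof -
  have "x = (\<Sum>b\<in>B. (x \<bullet> b) *\<^sub>R b)" using onb_expand[OF assms(1)] by simp
  also have "\<dots> = (\<Sum>b\<in>B. (y \<bullet> b) *\<^sub>R b)" using assms(2) by simp
  also have "\<dots> = y" using onb_expand[OF assms(1)] by simp
  finally show ?thesis .
qed

lemma onb_mat_eq:
  fixes M N :: "real^'n^'n"
  assumes "onb B" "\<And>x c. c \<in> B \<Longrightarrow> (M *v x) \<bullet> c = (N *v x) \<bullet> c"
  shows "M = N"
  using onb_vec_eq[OF assms(1)] assms(2) by (simp add: matrix_eq)

lemma onb_nonempty: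
  fixes B :: "(real^'n) set"
  assumes "onb B" shows "B \<noteq> {}"
proof
  assume "B = {}"
  then have "span B = {0::real^'n}" by simp
  moreover have "(axis undefined 1 :: real^'n) \<noteq> 0" by (simp add: axis_eq_0_iff)
  ultimately show False using assms by (auto simp: onb_def)
qed

definition opB :: "(real^'n) set \<Rightarrow> (real^'n \<Rightarrow> real) \<Rightarrow> real^'n^'n" where
  "opB B f = matrix (\<lambda>x. \<Sum>b\<in>B. (f b * (x \<bullet> b)) *\<^sub>R b)"

lemma opB_apply:
  fixes B :: "(real^'n) set"
  shows "opB B f *v x = (\<Sum>b\<in>B. (f b * (x \<bullet> b)) *\<^sub>R b)"
proof -
  have "linear (\<lambda>x::real^'n. \<Sum>b\<in>B. (f b * (x \<bullet> b)) *\<^sub>R b)"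
    by (rule linearI) (simp_all add: inner_add_left algebra_simps sum.distrib scaleR_sum_right)
  then show ?thesis unfolding opB_def by (simp add: matrix_works linear_matrix_vector_mul_eq)
qed

lemma opB_coef:
  assumes "onb B" "c \<in> B"
  shows "(opB B f *v x) \<bullet> c = f c * (x \<bullet> c)"
proof -
  have "(opB B f *v x) \<bullet> c = (\<Sum>b\<in>B. f b * (x \<bullet> b) * (b \<bullet> c))"
    by (simp add: opB_apply inner_sum_left)
  also have "\<dots> = (\<Sum>b\<in>B. if b = c then f c * (x \<bullet> c) else 0)"
    by (rule sum.cong) (auto simp: onb_inner[OF assms(1) _ assms(2)])
  also have "\<dots> = f c * (x \<bullet> c)" using assms by (simp add: onb_def)
  finally show ?thesis .
qed

lemma quad_nonneg_lin:
  fixes c d :: real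
  assumes "\<And>t. 2 * t * c + t^2 * d \<le> 0"
  shows "c = 0"
proof (rule ccontr)
  assume c: "c \<noteq> 0"
  then have c2: "c^2 > 0" by simp
  show False
  proof (cases "d \<ge> 0")
    case True
    have "2 * c * c + c^2 * d = c^2 * (2 + d)" by (simp add: algebra_simps power2_eq_square)
    moreover have "c^2 * (2 + d) > 0" using c2 True by simp
    ultimately have "2 * c * c + c^2 * d > 0" by simp
    then show False using assms[of c] by simp
  next
    case False
    have "2 * (-c/d) * c + (-c/d)^2 * d = - (c^2 / d)" using False
      by (simp add: field_simps power2_eq_square)
    moreover have "c^2 / d < 0" using c2 False by (simp add: divide_pos_neg)
    ultimately show False using assms[of "-c/d"] by simp
  qed
qed

lemma eigvec_subspace:
  fixes A :: "real^'n^'n"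
  assumes sym: "transpose A = A" and V: "subspace V" and inv: "\<And>x. x \<in> V \<Longrightarrow> A *v x \<in> V"
    and ne: "V \<noteq> {0}"
  shows "\<exists>v\<in>V. norm v = 1 \<and> A *v v = (v \<bullet> (A *v v)) *\<^sub>R v"
proof -
  define K where "K = V \<inter> sphere 0 1"
  have "compact K" unfolding K_def
    by (intro closed_Int_compact closed_subspace V compact_sphere)
  obtain x where x: "x \<in> V" "x \<noteq> 0" using ne V subspace_0 by blast
  have "x /\<^sub>R norm x \<in> K" using x V by (auto simp: K_def subspace_scale)
  then have "K \<noteq> {}" by blast
  have "continuous_on K (\<lambda>x. x \<bullet> (A *v x))"
    by (intro continuous_intros linear_continuous_on matrix_vector_mul_linear)
  from continuous_attains_sup[OF \<open>compact K\<close> \<open>K \<noteq> {}\<close> this]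
  obtain v where v: "v \<in> K" and vmax: "\<And>y. y \<in> K \<Longrightarrow> y \<bullet> (A *v y) \<le> v \<bullet> (A *v v)" by blast
  define \<mu> where "\<mu> = v \<bullet> (A *v v)"
  have vV: "v \<in> V" and nv: "norm v = 1" using v by (auto simp: K_def)
  have vv: "v \<bullet> v = 1" using nv by (simp add: norm_eq_1)
  have bound: "y \<bullet> (A *v y) \<le> \<mu> * (y \<bullet> y)" if "y \<in> V" for y
  proof (cases "y = 0")
    case True then show ?thesis by simp
  next
    case False
    have "y /\<^sub>R norm y \<in> K" using that False V by (auto simp: K_def subspace_scale)
    from vmax[OF this] have "(y /\<^sub>R norm y) \<bullet> (A *v (y /\<^sub>R norm y)) \<le> \<mu>" by (simp add: \<mu>_def)
    then have "(y \<bullet> (A *v y)) * (inverse (norm y) * inverse (norm y)) \<le> \<mu>"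
      by (simp add: matrix_vector_mult_scaleR mult_ac)
    then have "(y \<bullet> (A *v y)) / (norm y)^2 \<le> \<mu>"
      by (simp add: power2_eq_square divide_inverse)
    moreover have "(norm y)^2 > 0" using False by simp
    ultimately show ?thesis by (simp add: divide_le_eq power2_norm_eq_inner)
  qed
  have orth: "w \<bullet> (A *v v - \<mu> *\<^sub>R v) = 0" if "w \<in> V" for w
  proof (rule quad_nonneg_lin)
    fix t :: real
    have "v + t *\<^sub>R w \<in> V" using vV that V by (simp add: subspace_add subspace_scale)
    from bound[OF this]
    have "(v + t *\<^sub>R w) \<bullet> (A *v (v + t *\<^sub>R w)) \<le> \<mu> * ((v + t *\<^sub>R w) \<bullet> (v + t *\<^sub>R w))" .
    moreover have "v \<bullet> (A *v w) = w \<bullet> (A *v v)" using sym_inner[OF sym, of v w] by (simp add: inner_commute)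
    moreover have "w \<bullet> (A *v w) \<le> \<mu> * (w \<bullet> w)" using bound[OF that] .
    ultimately have "2 * t * (w \<bullet> (A *v v) - \<mu> * (w \<bullet> v)) + t^2 * (w \<bullet> (A *v w) - \<mu> * (w \<bullet> w)) \<le> 0"
      by (simp add: matrix_vector_mult_scaleR matrix_vector_right_distrib inner_add_left inner_add_right
            \<mu>_def[symmetric] vv algebra_simps power2_eq_square inner_commute[of v w])
    moreover have "t^2 * (w \<bullet> (A *v w) - \<mu> * (w \<bullet> w)) \<le> 0"
      using bound[OF that] by (simp add: mult_nonneg_nonpos)
    ultimately show "2 * t * (w \<bullet> (A *v v - \<mu> *\<^sub>R v)) + t^2 * (w \<bullet> (A *v w) - \<mu> * (w \<bullet> w)) \<le> 0"
      by (simp add: inner_diff_right)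
  qed
  have "A *v v - \<mu> *\<^sub>R v \<in> V" using inv[OF vV] vV V by (simp add: subspace_diff subspace_scale)
  from orth[OF this] have "A *v v = \<mu> *\<^sub>R v" by simp
  then show ?thesis using vV nv by (auto simp: \<mu>_def)
qed

lemma spectral_subspace:
  fixes A :: "real^'n^'n"
  assumes sym: "transpose A = A"
  shows "subspace V \<Longrightarrow> (\<forall>x\<in>V. A *v x \<in> V) \<Longrightarrow>
    \<exists>B. B \<subseteq> V \<and> finite B \<and> pairwise orthogonal B \<and> (\<forall>b\<in>B. norm b = 1) \<and> span B = V \<and>
        (\<forall>b\<in>B. A *v b = (b \<bullet> (A *v b)) *\<^sub>R b)"
proof (induction "dim V" arbitrary: V rule: less_induct)
  case less
  show ?case
  proof (cases "V = {0}")
    case True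
    then show ?thesis by (intro exI[of _ "{}"]) auto
  next
    case False
    obtain v where vV: "v \<in> V" and nv: "norm v = 1" and ev: "A *v v = (v \<bullet> (A *v v)) *\<^sub>R v"
      using eigvec_subspace[OF sym less.prems(1) _ False] less.prems(2) by blast
    define \<mu> where "\<mu> = v \<bullet> (A *v v)"
    have vv: "v \<bullet> v = 1" using nv by (simp add: norm_eq_1)
    define W where "W = V \<inter> {x. v \<bullet> x = 0}"
    have W: "subspace W" unfolding W_def by (intro subspace_inter less.prems(1) subspace_hyperplane)
    have WV: "W \<subseteq> V" by (auto simp: W_def)
    have "v \<notin> W" using vv by (auto simp: W_def)
    have "span W = W" "span V = V" using W less.prems(1) by (simp_all add: span_eq_iff)
    then have "span W \<subset> span V" using WV vV \<open>v \<notin> W\<close> by blast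
    then have dimW: "dim W < dim V" by (rule dim_psubset)
    have invW: "\<forall>x\<in>W. A *v x \<in> W"
    proof
      fix x assume x: "x \<in> W"
      have "v \<bullet> (A *v x) = (A *v v) \<bullet> x" by (rule sym_inner[OF sym])
      also have "\<dots> = (v \<bullet> (A *v v)) * (v \<bullet> x)" by (metis ev inner_scaleR_left)
      also have "\<dots> = 0" using x by (simp add: W_def)
      finally show "A *v x \<in> W" using x less.prems(2) by (auto simp: W_def)
    qed
    obtain B where B: "B \<subseteq> W" "finite B" "pairwise orthogonal B" "\<forall>b\<in>B. norm b = 1" "span B = W"
        "\<forall>b\<in>B. A *v b = (b \<bullet> (A *v b)) *\<^sub>R b"
      using less.hyps[OF dimW W invW] by blast
    show ?thesis
    proof (intro exI[of _ "insert v B"] conjI)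
      show "insert v B \<subseteq> V" using B(1) WV vV by auto
      show "finite (insert v B)" using B(2) by simp
      show "pairwise orthogonal (insert v B)"
        using B(1,3) by (auto simp: pairwise_insert orthogonal_def W_def inner_commute)
      show "\<forall>b\<in>insert v B. norm b = 1" using B(4) nv by auto
      show "\<forall>b\<in>insert v B. A *v b = (b \<bullet> (A *v b)) *\<^sub>R b" using B(6) ev by auto
      show "span (insert v B) = V"
      proof
        show "span (insert v B) \<subseteq> V"
          using B(1) WV vV less.prems(1) by (metis insert_subset span_minimal subset_trans)
        show "V \<subseteq> span (insert v B)"
        proof
          fix x assume x: "x \<in> V"
          have "x - (v \<bullet> x) *\<^sub>R v \<in> W"
            using x vV less.prems(1) vv by (auto simp: W_def subspace_diff subspace_scale inner_diff_right)
          then show "x \<in> span (insert v B)" using B(5) span_breakdown_eq by blast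
        qed
      qed
    qed
  qed
qed

lemma spectral:
  fixes A :: "real^'n^'n"
  assumes sym: "transpose A = A"
  obtains B where "onb B" "\<And>b. b \<in> B \<Longrightarrow> A *v b = (b \<bullet> (A *v b)) *\<^sub>R b"
  using spectral_subspace[OF sym, of UNIV] unfolding onb_def by auto

lemma eigvals_onb:
  fixes M :: "real^'n^'n"
  assumes B: "onb B" and sym: "transpose M = M" and ev: "\<And>b. b \<in> B \<Longrightarrow> M *v b = f b *\<^sub>R b"
  shows "eigvals M = f ` B"
proof
  show "eigvals M \<subseteq> f ` B"
  proof
    fix l assume "l \<in> eigvals M"
    then obtain w where w: "w \<noteq> 0" "M *v w = l *\<^sub>R w" by (auto simp: eigvals_def)
    have "\<exists>c\<in>B. w \<bullet> c \<noteq> 0"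
    proof (rule ccontr)
      assume "\<not> ?thesis"
      then have "w = 0" using onb_vec_eq[OF B, of w 0] by simp
      then show False using w by simp
    qed
    then obtain c where c: "c \<in> B" "w \<bullet> c \<noteq> 0" by blast
    have "l * (w \<bullet> c) = (M *v w) \<bullet> c" using w by simp
    also have "\<dots> = w \<bullet> (M *v c)" using sym_inner[OF sym, of w c] by simp
    also have "\<dots> = f c * (w \<bullet> c)" using ev[OF c(1)] by simp
    finally have "l = f c" using c(2) by simp
    then show "l \<in> f ` B" using c by blast
  qed
  show "f ` B \<subseteq> eigvals M"
  proof
    fix l assume "l \<in> f ` B"
    then obtain b where b: "b \<in> B" "l = f b" by blast
    have "b \<noteq> 0" using B b by (auto simp: onb_def)
    then show "l \<in> eigvals M" using ev[OF b(1)] b by (auto simp: eigvals_def)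
  qed
qed

lemma sym_spectral_facts:
  fixes A :: "real^'n^'n"
  assumes sym: "transpose A = A"
  obtains B f where "onb B" "eigvals A = f ` B" "\<And>x. x \<bullet> x = (\<Sum>b\<in>B. (x \<bullet> b)^2)"
    "\<And>x. x \<bullet> (A *v x) = (\<Sum>b\<in>B. f b * (x \<bullet> b)^2)"
    "\<And>x. (A *v x) \<bullet> (A *v x) = (\<Sum>b\<in>B. (f b)^2 * (x \<bullet> b)^2)"
proof -
  obtain B where B: "onb B" and ev: "\<And>b. b \<in> B \<Longrightarrow> A *v b = (b \<bullet> (A *v b)) *\<^sub>R b"
    using spectral[OF sym] by blast
  define f where "f b = b \<bullet> (A *v b)" for b
  have ev': "\<And>b. b \<in> B \<Longrightarrow> A *v b = f b *\<^sub>R b" using ev by (simp add: f_def)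
  have coef: "(A *v x) \<bullet> b = f b * (x \<bullet> b)" if "b \<in> B" for x b
    using sym_inner[OF sym, of x b] ev'[OF that] by simp
  show ?thesis
  proof
    show "onb B" by fact
    show "eigvals A = f ` B" by (rule eigvals_onb[OF B sym ev'])
    show "x \<bullet> x = (\<Sum>b\<in>B. (x \<bullet> b)^2)" for x
      using onb_parseval[OF B, of x x] by (simp add: power2_eq_square)
    show "x \<bullet> (A *v x) = (\<Sum>b\<in>B. f b * (x \<bullet> b)^2)" for x
      using onb_parseval[OF B, of x "A *v x"] by (simp add: coef power2_eq_square mult_ac cong: sum.cong)
    show "(A *v x) \<bullet> (A *v x) = (\<Sum>b\<in>B. (f b)^2 * (x \<bullet> b)^2)" for x
      using onb_parseval[OF B, of "A *v x" "A *v x"] by (simp add: coef power2_eq_square mult_ac cong: sum.cong)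
  qed
qed


lemma eigvals_finite_ne:
  fixes A :: "real^'n^'n"
  assumes sym: "transpose A = A"
  shows "finite (eigvals A)" "eigvals A \<noteq> {}"
proof -
  obtain B f where B: "onb B" "eigvals A = f ` B" "\<And>x. x \<bullet> x = (\<Sum>b\<in>B. (x \<bullet> b)^2)"
    "\<And>x. x \<bullet> (A *v x) = (\<Sum>b\<in>B. f b * (x \<bullet> b)^2)"
    "\<And>x. (A *v x) \<bullet> (A *v x) = (\<Sum>b\<in>B. (f b)^2 * (x \<bullet> b)^2)"
    by (rule sym_spectral_facts[OF sym], rule that, assumption+)
  have "finite B" using B(1) unfolding onb_def by blast
  then show "finite (eigvals A)" using B(2) by simp
  show "eigvals A \<noteq> {}" using onb_nonempty[OF B(1)] B(2) by simp
qed

lemma quad_upper: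
  fixes A :: "real^'n^'n"
  assumes sym: "transpose A = A" and le: "\<And>l. l \<in> eigvals A \<Longrightarrow> l \<le> c"
  shows "x \<bullet> (A *v x) \<le> c * (x \<bullet> x)"
proof -
  obtain B f where B: "onb B" "eigvals A = f ` B" "\<And>x. x \<bullet> x = (\<Sum>b\<in>B. (x \<bullet> b)^2)"
    "\<And>x. x \<bullet> (A *v x) = (\<Sum>b\<in>B. f b * (x \<bullet> b)^2)"
    "\<And>x. (A *v x) \<bullet> (A *v x) = (\<Sum>b\<in>B. (f b)^2 * (x \<bullet> b)^2)"
    by (rule sym_spectral_facts[OF sym], rule that, assumption+)
  have "(\<Sum>b\<in>B. f b * (x \<bullet> b)^2) \<le> (\<Sum>b\<in>B. c * (x \<bullet> b)^2)"
    using le B(2) by (intro sum_mono mult_right_mono) simp_all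
  then show ?thesis using B(3,4) by (simp add: sum_distrib_left)
qed

lemma quad_lower:
  fixes A :: "real^'n^'n"
  assumes sym: "transpose A = A" and le: "\<And>l. l \<in> eigvals A \<Longrightarrow> c \<le> l"
  shows "c * (x \<bullet> x) \<le> x \<bullet> (A *v x)"
proof -
  obtain B f where B: "onb B" "eigvals A = f ` B" "\<And>x. x \<bullet> x = (\<Sum>b\<in>B. (x \<bullet> b)^2)"
    "\<And>x. x \<bullet> (A *v x) = (\<Sum>b\<in>B. f b * (x \<bullet> b)^2)"
    "\<And>x. (A *v x) \<bullet> (A *v x) = (\<Sum>b\<in>B. (f b)^2 * (x \<bullet> b)^2)"
    by (rule sym_spectral_facts[OF sym], rule that, assumption+)
  have "(\<Sum>b\<in>B. c * (x \<bullet> b)^2) \<le> (\<Sum>b\<in>B. f b * (x \<bullet> b)^2)"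
    using le B(2) by (intro sum_mono mult_right_mono) simp_all
  then show ?thesis using B(3,4) by (simp add: sum_distrib_left)
qed


lemma norm_bound_eig:
  fixes A :: "real^'n^'n"
  assumes sym: "transpose A = A" and le: "\<And>l. l \<in> eigvals A \<Longrightarrow> \<bar>l\<bar> \<le> c"
  shows "norm (A *v x) \<le> c * norm x"
proof -
  obtain B f where B: "onb B" "eigvals A = f ` B" "\<And>x. x \<bullet> x = (\<Sum>b\<in>B. (x \<bullet> b)^2)"
    "\<And>x. x \<bullet> (A *v x) = (\<Sum>b\<in>B. f b * (x \<bullet> b)^2)"
    "\<And>x. (A *v x) \<bullet> (A *v x) = (\<Sum>b\<in>B. (f b)^2 * (x \<bullet> b)^2)"
    by (rule sym_spectral_facts[OF sym], rule that, assumption+)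
  obtain l0 where "l0 \<in> eigvals A" using eigvals_finite_ne(2)[OF sym] by blast
  then have c0: "c \<ge> 0" using le[of l0] by linarith
  have "(\<Sum>b\<in>B. (f b)^2 * (x \<bullet> b)^2) \<le> (\<Sum>b\<in>B. c^2 * (x \<bullet> b)^2)"
  proof (rule sum_mono, rule mult_right_mono)
    fix b assume "b \<in> B"
    then have "\<bar>f b\<bar> \<le> c" using le B(2) by blast
    then show "(f b)^2 \<le> c^2" by (metis abs_ge_zero power2_abs power_mono)
  qed simp
  also have "\<dots> = c^2 * (x \<bullet> x)" by (simp only: B(3)[of x] sum_distrib_left)
  finally have "(A *v x) \<bullet> (A *v x) \<le> c^2 * (x \<bullet> x)" by (simp only: B(5))
  then have "(norm (A *v x))^2 \<le> (c * norm x)^2"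
    by (simp only: power2_norm_eq_inner power_mult_distrib)
  then show ?thesis using c0 by (simp add: power2_le_iff_abs_le)
qed

lemma opB_cong:
  fixes B :: "(real^'n) set"
  assumes "\<And>b. b \<in> B \<Longrightarrow> f b = g b"
  shows "opB B f = opB B g"
  unfolding opB_def using assms by (metis (no_types, lifting) sum.cong)

lemma opB_sym:
  fixes B :: "(real^'n) set"
  assumes B: "onb B"
  shows "transpose (opB B f) = opB B f"
proof (rule sym_of_inner)
  fix x y :: "real^'n"
  have "(opB B f *v x) \<bullet> y = (\<Sum>b\<in>B. (f b * (x \<bullet> b)) * (y \<bullet> b))"
    by (simp add: onb_parseval[OF B, of "opB B f *v x" y] opB_coef[OF B])
  also have "\<dots> = (\<Sum>b\<in>B. (x \<bullet> b) * (f b * (y \<bullet> b)))"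
    by (rule sum.cong) (simp_all add: mult_ac)
  also have "\<dots> = x \<bullet> (opB B f *v y)"
    by (simp add: onb_parseval[OF B, of x "opB B f *v y"] opB_coef[OF B])
  finally show "(opB B f *v x) \<bullet> y = x \<bullet> (opB B f *v y)" .
qed

lemma opB_eig:
  fixes B :: "(real^'n) set"
  assumes B: "onb B" and c: "c \<in> B"
  shows "opB B f *v c = f c *\<^sub>R c"
proof (rule onb_vec_eq[OF B])
  fix d assume d: "d \<in> B"
  show "(opB B f *v c) \<bullet> d = (f c *\<^sub>R c) \<bullet> d"
    using opB_coef[OF B d, of f c] onb_inner[OF B c d] onb_inner[OF B d c] by auto
qed

lemma opB_mult:
  fixes B :: "(real^'n) set"
  assumes B: "onb B"
  shows "opB B f ** opB B g = opB B (\<lambda>b. f b * g b)"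
proof (rule onb_mat_eq[OF B])
  fix x and c :: "real^'n" assume c: "c \<in> B"
  show "((opB B f ** opB B g) *v x) \<bullet> c = (opB B (\<lambda>b. f b * g b) *v x) \<bullet> c"
    by (simp add: matrix_vector_mul_assoc[symmetric] opB_coef[OF B c])
qed

lemma opB_one:
  fixes B :: "(real^'n) set"
  assumes B: "onb B"
  shows "opB B (\<lambda>b. 1) = mat 1"
  by (rule onb_mat_eq[OF B]) (simp add: opB_coef[OF B])

lemma sym_eq_opB:
  fixes B :: "(real^'n) set" and A :: "real^'n^'n"
  assumes B: "onb B" and sym: "transpose A = A" and ev: "\<And>b. b \<in> B \<Longrightarrow> A *v b = f b *\<^sub>R b"
  shows "A = opB B f"
proof (rule onb_mat_eq[OF B])
  fix x and c :: "real^'n" assume c: "c \<in> B"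
  have "(A *v x) \<bullet> c = x \<bullet> (A *v c)" using sym_inner[OF sym, of x c] by simp
  also have "\<dots> = f c * (x \<bullet> c)" using ev[OF c] by simp
  finally show "(A *v x) \<bullet> c = (opB B f *v x) \<bullet> c" by (simp add: opB_coef[OF B c])
qed

lemma pd_sqrt_props:
  fixes A :: "real^'n^'n"
  assumes sym: "transpose A = A" and pos: "\<forall>l\<in>eigvals A. l > 0"
  obtains B \<mu> where "onb B" "\<And>b. b \<in> B \<Longrightarrow> \<mu> b > 0" "A = opB B \<mu>"
    "pd_sqrt A = opB B (\<lambda>b. sqrt (\<mu> b))" "inv_sqrt A = opB B (\<lambda>b. 1 / sqrt (\<mu> b))"
proof -
  obtain B where B: "onb B" and ev: "\<And>b. b \<in> B \<Longrightarrow> A *v b = (b \<bullet> (A *v b)) *\<^sub>R b"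
    using spectral[OF sym] by blast
  define \<mu> where "\<mu> b = b \<bullet> (A *v b)" for b
  have ev': "\<And>b. b \<in> B \<Longrightarrow> A *v b = \<mu> b *\<^sub>R b" using ev by (simp add: \<mu>_def)
  have eA: "eigvals A = \<mu> ` B" by (rule eigvals_onb[OF B sym ev'])
  have mpos: "\<mu> b > 0" if "b \<in> B" for b using pos eA that by blast
  have Aeq: "A = opB B \<mu>" by (rule sym_eq_opB[OF B sym ev'])
  define S where "S = opB B (\<lambda>b. sqrt (\<mu> b))"
  have Ssym: "transpose S = S" unfolding S_def by (rule opB_sym[OF B])
  have eS: "eigvals S = (\<lambda>b. sqrt (\<mu> b)) ` B"
    unfolding S_def by (rule eigvals_onb[OF B opB_sym[OF B] opB_eig[OF B]])
  have Spos: "\<forall>l\<in>eigvals S. l > 0" using eS mpos by auto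
  have SS: "S ** S = A" unfolding S_def Aeq opB_mult[OF B]
    by (rule opB_cong) (simp add: less_imp_le mpos)
  have uniq: "T = S" if T: "transpose T = T" "\<forall>l\<in>eigvals T. l > 0" "T ** T = A" for T
  proof (rule onb_mat_eq[OF B])
    fix x and c :: "real^'n" assume c: "c \<in> B"
    define \<sigma> where "\<sigma> = sqrt (\<mu> c)"
    have \<sigma>: "\<sigma> > 0" using mpos[OF c] by (simp add: \<sigma>_def)
    have TT: "T *v (T *v c) = (\<sigma> * \<sigma>) *\<^sub>R c"
      using ev'[OF c] T(3) mpos[OF c] by (simp add: matrix_vector_mul_assoc \<sigma>_def)
    define w where "w = T *v c - \<sigma> *\<^sub>R c"
    have Tw: "T *v w = (- \<sigma>) *\<^sub>R w"
      by (simp add: w_def matrix_vector_right_distrib matrix_vector_mult_diff_distrib matrix_vector_mult_scaleR TT algebra_simps)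
    have "w = 0"
    proof (rule ccontr)
      assume "w \<noteq> 0"
      then have "- \<sigma> \<in> eigvals T" using Tw by (auto simp: eigvals_def)
      then show False using T(2) \<sigma> by force
    qed
    then have Tc: "T *v c = \<sigma> *\<^sub>R c" by (simp add: w_def)
    have "(T *v x) \<bullet> c = x \<bullet> (T *v c)" using sym_inner[OF T(1), of x c] by simp
    also have "\<dots> = \<sigma> * (x \<bullet> c)" using Tc by simp
    finally show "(T *v x) \<bullet> c = (S *v x) \<bullet> c" by (simp add: S_def opB_coef[OF B c] \<sigma>_def)
  qed
  have "pd_sqrt A = S" unfolding pd_sqrt_def
  proof (rule the_equality)
    show "transpose S = S \<and> (\<forall>l\<in>eigvals S. 0 < l) \<and> S ** S = A" using Ssym Spos SS by blast
    show "\<And>T. transpose T = T \<and> (\<forall>l\<in>eigvals T. 0 < l) \<and> T ** T = A \<Longrightarrow> T = S" using uniq by blast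
  qed
  define R where "R = opB B (\<lambda>b. 1 / sqrt (\<mu> b))"
  have SR: "S ** R = mat 1" "R ** S = mat 1"
    unfolding S_def R_def opB_mult[OF B] opB_one[OF B, symmetric]
    by (rule opB_cong, simp add: mpos less_imp_neq[OF mpos, symmetric])+
  have "matrix_inv S = R" unfolding matrix_inv_def
  proof (rule someI2[where a=R])
    show "S ** R = mat 1 \<and> R ** S = mat 1" using SR by blast
    fix X assume "S ** X = mat 1 \<and> X ** S = mat 1"
    then have "X = X ** (S ** R)" "X ** S = mat 1" by (simp_all add: SR matrix_mul_rid)
    then show "X = R" by (simp add: matrix_mul_assoc matrix_mul_lid)
  qed
  then have "inv_sqrt A = R" using \<open>pd_sqrt A = S\<close> by (simp add: inv_sqrt_def)
  then show ?thesis using that[OF B mpos Aeq] \<open>pd_sqrt A = S\<close> by (simp add: S_def R_def)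
qed

lemma rank1_sym:
  fixes u a :: "'k::finite \<Rightarrow> real"
  shows "transpose ((\<chi> i j. \<kappa> * u i * u j + (if i = j then a i else 0)) :: real^'k^'k)
       = (\<chi> i j. \<kappa> * u i * u j + (if i = j then a i else 0))"
  by (simp add: transpose_def vec_eq_iff mult_ac)

lemma rank1_quad:
  fixes u a :: "'k::finite \<Rightarrow> real" and x :: "real^'k"
  shows "x \<bullet> (((\<chi> i j. \<kappa> * u i * u j + (if i = j then a i else 0)) :: real^'k^'k) *v x)
       = (\<Sum>i\<in>UNIV. a i * (x$i)^2) + \<kappa> * (\<Sum>i\<in>UNIV. u i * x$i)^2"
proof -
  have "x \<bullet> (((\<chi> i j. \<kappa> * u i * u j + (if i = j then a i else 0)) :: real^'k^'k) *v x)
      = (\<Sum>i\<in>UNIV. x$i * (\<Sum>j\<in>UNIV. (\<kappa> * u i * u j + (if i = j then a i else 0)) * x$j))"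
    by (simp add: inner_vec_def matrix_vector_mult_def)
  also have "\<dots> = (\<Sum>i\<in>UNIV. \<kappa> * (u i * x$i) * (\<Sum>j\<in>UNIV. u j * x$j) + a i * (x$i)^2)"
  proof (rule sum.cong)
    fix i assume "i \<in> (UNIV :: 'k set)"
    have d: "(\<Sum>j\<in>UNIV. (if i = j then a i else 0) * x$j) = a i * x$i"
    proof -
      have "(\<Sum>j\<in>UNIV. (if i = j then a i else 0) * x$j) = (\<Sum>j\<in>UNIV. if i = j then a i * x$j else 0)"
        by (rule sum.cong) auto
      also have "\<dots> = a i * x$i" by (simp add: sum.delta)
      finally show ?thesis .
    qed
    have "(\<Sum>j\<in>UNIV. (\<kappa> * u i * u j + (if i = j then a i else 0)) * x$j)
        = (\<Sum>j\<in>UNIV. \<kappa> * u i * (u j * x$j)) + (\<Sum>j\<in>UNIV. (if i = j then a i else 0) * x$j)"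
      unfolding sum.distrib[symmetric] by (rule sum.cong) (simp_all add: algebra_simps)
    also have "\<dots> = \<kappa> * u i * (\<Sum>j\<in>UNIV. u j * x$j) + a i * x$i"
      by (simp add: d sum_distrib_left)
    finally show "x$i * (\<Sum>j\<in>UNIV. (\<kappa> * u i * u j + (if i = j then a i else 0)) * x$j)
        = \<kappa> * (u i * x$i) * (\<Sum>j\<in>UNIV. u j * x$j) + a i * (x$i)^2"
      by (simp add: algebra_simps power2_eq_square)
  qed simp
  also have "\<dots> = (\<Sum>i\<in>UNIV. a i * (x$i)^2) + \<kappa> * (\<Sum>i\<in>UNIV. u i * x$i)^2"
    by (simp add: sum.distrib sum_distrib_left[symmetric] sum_distrib_right power2_eq_square mult_ac)
  finally show ?thesis .
qed

lemma weighted_CS: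
  fixes u x c :: "'k::finite \<Rightarrow> real"
  assumes c: "\<And>i. c i > 0"
  shows "(\<Sum>i\<in>UNIV. u i * x i)^2 \<le> (\<Sum>i\<in>UNIV. (u i)^2 / c i) * (\<Sum>i\<in>UNIV. c i * (x i)^2)"
proof -
  define X :: "real^'k" where "X = (\<chi> i. u i / sqrt (c i))"
  define Y :: "real^'k" where "Y = (\<chi> i. sqrt (c i) * x i)"
  have "X \<bullet> Y = (\<Sum>i\<in>UNIV. u i * x i)"
    using c by (simp add: X_def Y_def inner_vec_def less_imp_neq[OF c, symmetric])
  moreover have "X \<bullet> X = (\<Sum>i\<in>UNIV. (u i)^2 / c i)"
    using c by (simp add: X_def inner_vec_def power2_eq_square less_imp_le)
  moreover have "Y \<bullet> Y = (\<Sum>i\<in>UNIV. c i * (x i)^2)"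
    using c by (simp add: Y_def inner_vec_def power2_eq_square less_imp_le mult_ac)
  ultimately show ?thesis using Cauchy_Schwarz_ineq[of X Y] by simp
qed

lemma eig_quad:
  fixes A :: "real^'n^'n"
  assumes "l \<in> eigvals A"
  obtains v where "v \<noteq> 0" "v \<bullet> (A *v v) = l * (v \<bullet> v)"
  using assms by (auto simp: eigvals_def)

lemma norm_sq_vec: "(x::real^'k) \<bullet> x = (\<Sum>i\<in>UNIV. (x$i)^2)"
  by (simp add: inner_vec_def power2_eq_square)

lemma CS_apply:
  fixes u x c :: "'k::finite \<Rightarrow> real"
  assumes c: "\<And>i. c i > 0" and k: "\<kappa> \<ge> 0" and sum1: "\<kappa> * (\<Sum>i\<in>UNIV. (u i)^2 / c i) \<le> 1"
  shows "\<kappa> * (\<Sum>i\<in>UNIV. u i * x i)^2 \<le> (\<Sum>i\<in>UNIV. c i * (x i)^2)"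
proof -
  have S: "(\<Sum>i\<in>UNIV. c i * (x i)^2) \<ge> 0" using c by (intro sum_nonneg) (simp add: less_imp_le)
  have "\<kappa> * (\<Sum>i\<in>UNIV. u i * x i)^2 \<le> \<kappa> * ((\<Sum>i\<in>UNIV. (u i)^2 / c i) * (\<Sum>i\<in>UNIV. c i * (x i)^2))"
    by (rule mult_left_mono[OF weighted_CS[OF c] k])
  also have "\<dots> = (\<kappa> * (\<Sum>i\<in>UNIV. (u i)^2 / c i)) * (\<Sum>i\<in>UNIV. c i * (x i)^2)" by simp
  also have "\<dots> \<le> 1 * (\<Sum>i\<in>UNIV. c i * (x i)^2)" using sum1 S by (rule mult_right_mono)
  finally show ?thesis by simp
qed

lemma Cplus_facts:
  fixes ns :: "'k::finite \<Rightarrow> nat" and x :: "real^'k"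
  assumes ns: "\<forall>i. ns i > 0" and p: "0 < p" and \<eta>: "0 \<le> \<eta>" "\<eta> < 1/2" and \<tau>: "\<tau>m \<ge> 0"
    and d: "\<forall>i. dplus (\<Sum>j\<in>UNIV. ns j) p \<eta> (ns i) > 0"
  defines "N \<equiv> real (\<Sum>j\<in>UNIV. ns j)"
  defines "s \<equiv> Min ((\<lambda>i. real (ns i) / N) ` UNIV)"
  defines "Bv \<equiv> \<tau>m + N * \<eta> / (N * (s * (1 - 2*\<eta>) + \<eta>) - (1 - \<eta>))"
  shows "transpose (Cplus ns p \<eta> \<tau>m) = Cplus ns p \<eta> \<tau>m"
    and "\<tau>m * (x \<bullet> x) \<le> x \<bullet> (Cplus ns p \<eta> \<tau>m *v x)"
    and "x \<bullet> (Cplus ns p \<eta> \<tau>m *v x) \<le> Bv * (x \<bullet> x)"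
proof -
  define n where "n = (\<Sum>j\<in>UNIV. ns j)"
  define dd where "dd i = dplus n p \<eta> (ns i)" for i
  define u where "u i = sqrt (real (ns i) / dd i)" for i
  define a where "a i = 1 + \<tau>m + p / dd i * (1 - \<eta> - real (ns i) * (1 - 2*\<eta>))" for i
  have Cp: "Cplus ns p \<eta> \<tau>m = (\<chi> i j. (- p * \<eta>) * u i * u j + (if i = j then a i else 0))"
    unfolding Cplus_def Let_def a_def u_def dd_def n_def by simp
  show "transpose (Cplus ns p \<eta> \<tau>m) = Cplus ns p \<eta> \<tau>m" unfolding Cp by (rule rank1_sym)
  have quad: "x \<bullet> (Cplus ns p \<eta> \<tau>m *v x) = (\<Sum>i\<in>UNIV. a i * (x$i)^2) + (- p * \<eta>) * (\<Sum>i\<in>UNIV. u i * x$i)^2"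
    unfolding Cp by (rule rank1_quad)
  have ddpos: "dd i > 0" for i using d by (simp add: dd_def n_def)
  have Nn: "N = real n" by (simp add: N_def n_def)
  have Npos: "N > 0"
  proof -
    obtain i0 :: 'k where True by blast
    have "ns i0 \<le> n" unfolding n_def by (rule member_le_sum) auto
    then show ?thesis using ns Nn by (metis of_nat_0_less_iff order_less_le_trans)
  qed
  define c where "c i = p * N * \<eta> / dd i" for i
  have a_eq: "a i = \<tau>m + c i" for i
  proof -
    have "dd i \<noteq> 0" using ddpos[of i] by simp
    moreover have "dd i = p * (real (ns i) * (1 - 2*\<eta>) + N * \<eta> - (1 - \<eta>))"
      by (simp add: dd_def dplus_def Nn)
    ultimately show ?thesis unfolding a_def c_def by (simp add: field_simps)
  qed
  have c0: "c i \<ge> 0" for i using p Npos \<eta> ddpos[of i] by (simp add: c_def)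
  have usq: "(u i)^2 = real (ns i) / dd i" for i
    using ddpos[of i] by (simp add: u_def)
  have xx: "x \<bullet> x = (\<Sum>i\<in>UNIV. (x$i)^2)" by (rule norm_sq_vec)
  have main: "x \<bullet> (Cplus ns p \<eta> \<tau>m *v x) = \<tau>m * (x \<bullet> x) + ((\<Sum>i\<in>UNIV. c i * (x$i)^2) - p * \<eta> * (\<Sum>i\<in>UNIV. u i * x$i)^2)"
    by (simp add: quad a_eq xx distrib_right sum.distrib sum_distrib_left)
  show "\<tau>m * (x \<bullet> x) \<le> x \<bullet> (Cplus ns p \<eta> \<tau>m *v x)"
  proof (cases "\<eta> = 0")
    case True
    then show ?thesis using main by (simp add: c_def)
  next
    case False
    then have \<eta>p: "\<eta> > 0" using \<eta> by simp
    have cpos: "c i > 0" for i using p Npos \<eta>p ddpos[of i] by (simp add: c_def)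
    have "(\<Sum>i\<in>UNIV. (u i)^2 / c i) = (\<Sum>i\<in>UNIV. real (ns i) / (p * N * \<eta>))"
      by (rule sum.cong) (use ddpos p Npos \<eta>p in \<open>simp_all add: usq c_def less_imp_neq[OF ddpos, symmetric]\<close>)
    also have "\<dots> = N / (p * N * \<eta>)" by (simp add: sum_divide_distrib[symmetric] N_def)
    finally have "p * \<eta> * (\<Sum>i\<in>UNIV. (u i)^2 / c i) = 1" using p Npos \<eta>p by simp
    then have "p * \<eta> * (\<Sum>i\<in>UNIV. u i * x$i)^2 \<le> (\<Sum>i\<in>UNIV. c i * (x$i)^2)"
      using CS_apply[of c "p * \<eta>" u "\<lambda>i. x$i"] cpos p \<eta>p by simp
    then show ?thesis using main by simp
  qed
  have Ne: "\<exists>i. s = real (ns i) / N"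
  proof -
    have "s \<in> (\<lambda>i. real (ns i) / N) ` UNIV" unfolding s_def by (rule Min_in) auto
    then show ?thesis by blast
  qed
  then obtain i0 where i0: "s = real (ns i0) / N" by blast
  define D where "D = N * (s * (1 - 2*\<eta>) + \<eta>) - (1 - \<eta>)"
  have Ddd: "dd i0 = p * D" using Npos by (simp add: D_def dd_def dplus_def Nn i0 algebra_simps)
  have Dpos: "D > 0" using ddpos[of i0] p Ddd by (simp add: zero_less_mult_iff)
  have cle: "c i \<le> N * \<eta> / D" for i
  proof -
    have "s \<le> real (ns i) / N" unfolding s_def by (rule Min_le) auto
    then have "N * s \<le> real (ns i)" using Npos by (simp add: field_simps)
    then have "N * s * (1 - 2*\<eta>) \<le> real (ns i) * (1 - 2*\<eta>)"
      using \<eta> by (intro mult_right_mono) auto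
    then have "D \<le> real (ns i) * (1 - 2*\<eta>) + N * \<eta> - (1 - \<eta>)"
      unfolding D_def by (simp add: algebra_simps)
    moreover have "dd i = p * (real (ns i) * (1 - 2*\<eta>) + N * \<eta> - (1 - \<eta>))"
      by (simp add: dd_def dplus_def Nn)
    ultimately have "c i = N * \<eta> / (real (ns i) * (1 - 2*\<eta>) + N * \<eta> - (1 - \<eta>))"
      using p by (simp add: c_def)
    also have "\<dots> \<le> N * \<eta> / D"
      using \<open>D \<le> _\<close> Dpos Npos \<eta> by (intro divide_left_mono) auto
    finally show ?thesis .
  qed
  have "(\<Sum>i\<in>UNIV. c i * (x$i)^2) \<le> (\<Sum>i\<in>UNIV. (N * \<eta> / D) * (x$i)^2)"
    by (intro sum_mono mult_right_mono cle) simp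
  moreover have "p * \<eta> * (\<Sum>i\<in>UNIV. u i * x$i)^2 \<ge> 0" using p \<eta> by simp
  ultimately have "x \<bullet> (Cplus ns p \<eta> \<tau>m *v x) \<le> \<tau>m * (x \<bullet> x) + (N * \<eta> / D) * (x \<bullet> x)"
    using main by (simp add: xx sum_distrib_left)
  then show "x \<bullet> (Cplus ns p \<eta> \<tau>m *v x) \<le> Bv * (x \<bullet> x)"
    by (simp add: Bv_def D_def distrib_right)
qed

lemma Cminus_facts:
  fixes ns :: "'k::finite \<Rightarrow> nat" and x :: "real^'k"
  assumes ns: "\<forall>i. ns i > 0" and p: "0 < p" and \<eta>: "0 \<le> \<eta>" "\<eta> < 1/2"
    and d: "\<forall>i. dminus (\<Sum>j\<in>UNIV. ns j) p \<eta> (ns i) > 0"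
  shows "transpose (Cminus ns p \<eta> \<tau>p) = Cminus ns p \<eta> \<tau>p"
    and "\<tau>p * (x \<bullet> x) \<le> x \<bullet> (Cminus ns p \<eta> \<tau>p *v x)"
proof -
  define n where "n = (\<Sum>j\<in>UNIV. ns j)"
  define N where "N = real n"
  define dd where "dd i = dminus n p \<eta> (ns i)" for i
  define u where "u i = sqrt (real (ns i) / dd i)" for i
  define a where "a i = 1 + \<tau>p + p / dd i * (\<eta> + real (ns i) * (1 - 2*\<eta>))" for i
  have Cm: "Cminus ns p \<eta> \<tau>p = (\<chi> i j. (- p * (1 - \<eta>)) * u i * u j + (if i = j then a i else 0))"
    unfolding Cminus_def Let_def a_def u_def dd_def n_def by simp
  show "transpose (Cminus ns p \<eta> \<tau>p) = Cminus ns p \<eta> \<tau>p" unfolding Cm by (rule rank1_sym)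
  have quad: "x \<bullet> (Cminus ns p \<eta> \<tau>p *v x) = (\<Sum>i\<in>UNIV. a i * (x$i)^2) + (- p * (1 - \<eta>)) * (\<Sum>i\<in>UNIV. u i * x$i)^2"
    unfolding Cm by (rule rank1_quad)
  have ddpos: "dd i > 0" for i using d by (simp add: dd_def n_def)
  have Npos: "N > 0"
  proof -
    obtain i0 :: 'k where True by blast
    have "ns i0 \<le> n" unfolding n_def by (rule member_le_sum) auto
    then show ?thesis using ns N_def by (metis of_nat_0_less_iff order_less_le_trans)
  qed
  define c where "c i = p * N * (1 - \<eta>) / dd i" for i
  have a_eq: "a i = \<tau>p + c i" for i
  proof -
    have "dd i \<noteq> 0" using ddpos[of i] by simp
    moreover have "dd i = p * (N * (1 - \<eta>) - real (ns i) * (1 - 2*\<eta>) - \<eta>)"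
      by (simp add: dd_def dminus_def N_def)
    ultimately show ?thesis unfolding a_def c_def by (simp add: field_simps)
  qed
  have usq: "(u i)^2 = real (ns i) / dd i" for i
    using ddpos[of i] by (simp add: u_def)
  have xx: "x \<bullet> x = (\<Sum>i\<in>UNIV. (x$i)^2)" by (rule norm_sq_vec)
  have main: "x \<bullet> (Cminus ns p \<eta> \<tau>p *v x) = \<tau>p * (x \<bullet> x) + ((\<Sum>i\<in>UNIV. c i * (x$i)^2) - p * (1 - \<eta>) * (\<Sum>i\<in>UNIV. u i * x$i)^2)"
    by (simp add: quad a_eq xx distrib_right sum.distrib sum_distrib_left)
  have \<eta>p: "1 - \<eta> > 0" using \<eta> by simp
  have cpos: "c i > 0" for i using p Npos \<eta>p ddpos[of i] by (simp add: c_def)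
  have "(\<Sum>i\<in>UNIV. (u i)^2 / c i) = (\<Sum>i\<in>UNIV. real (ns i) / (p * N * (1 - \<eta>)))"
    by (rule sum.cong) (use ddpos p Npos \<eta>p in \<open>simp_all add: usq c_def less_imp_neq[OF ddpos, symmetric]\<close>)
  also have "\<dots> = N / (p * N * (1 - \<eta>))" by (simp add: sum_divide_distrib[symmetric] N_def n_def)
  finally have "p * (1 - \<eta>) * (\<Sum>i\<in>UNIV. (u i)^2 / c i) = 1" using p Npos \<eta>p by simp
  then have "p * (1 - \<eta>) * (\<Sum>i\<in>UNIV. u i * x$i)^2 \<le> (\<Sum>i\<in>UNIV. c i * (x$i)^2)"
    using CS_apply[of c "p * (1 - \<eta>)" u "\<lambda>i. x$i"] cpos p \<eta>p by simp
  then show "\<tau>p * (x \<bullet> x) \<le> x \<bullet> (Cminus ns p \<eta> \<tau>p *v x)" using main by simp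
qed

theorem mainTheorem10:
  fixes ns :: "'k::finite \<Rightarrow> nat" and p \<eta> \<tau>p \<tau>m :: real
  assumes "CARD('k) \<ge> 2"
    and "\<forall>i. ns i > 0"
    and "0 < p" "p \<le> 1" "0 \<le> \<eta>" "\<eta> < 1/2"
    and "\<tau>p > 0" "\<tau>m \<ge> 0"
    and "\<forall>i. dplus (\<Sum>j\<in>UNIV. ns j) p \<eta> (ns i) > 0"
    and "\<forall>i. dminus (\<Sum>j\<in>UNIV. ns j) p \<eta> (ns i) > 0"
  shows "let n = real (\<Sum>j\<in>UNIV. ns j);
             s = Min ((\<lambda>i. real (ns i) / n) ` UNIV);
             B = \<tau>m + n * \<eta> / (n * (s * (1 - 2*\<eta>) + \<eta>) - (1 - \<eta>));
             Cp = Cplus ns p \<eta> \<tau>m; Cm = Cminus ns p \<eta> \<tau>p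
         in lambda_max Cp \<le> B \<and> lambda_min Cm \<ge> \<tau>p \<and>
            spec_norm (inv_sqrt Cm ** Cp ** inv_sqrt Cm) \<le> lambda_max Cp / lambda_min Cm \<and>
            lambda_max Cp / lambda_min Cm \<le> B / \<tau>p"
proof -
  note ns = assms(2) and p = assms(3) and \<eta> = assms(5,6) and \<tau>p = assms(7) and \<tau>m = assms(8)
    and dp = assms(9) and dm = assms(10)
  define n where "n = real (\<Sum>j\<in>UNIV. ns j)"
  define s where "s = Min ((\<lambda>i. real (ns i) / n) ` UNIV)"
  define Bv where "Bv = \<tau>m + n * \<eta> / (n * (s * (1 - 2*\<eta>) + \<eta>) - (1 - \<eta>))"
  define Cp where "Cp = Cplus ns p \<eta> \<tau>m"
  define Cm where "Cm = Cminus ns p \<eta> \<tau>p"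
  have CpS: "transpose Cp = Cp" unfolding Cp_def by (rule Cplus_facts(1)[OF ns p \<eta> \<tau>m dp])
  have CpL: "\<tau>m * (x \<bullet> x) \<le> x \<bullet> (Cp *v x)" for x unfolding Cp_def by (rule Cplus_facts(2)[OF ns p \<eta> \<tau>m dp])
  have CpU: "x \<bullet> (Cp *v x) \<le> Bv * (x \<bullet> x)" for x
    unfolding Cp_def Bv_def s_def n_def by (rule Cplus_facts(3)[OF ns p \<eta> \<tau>m dp])
  have CmS: "transpose Cm = Cm" unfolding Cm_def by (rule Cminus_facts(1)[OF ns p \<eta> dm])
  have CmL: "\<tau>p * (x \<bullet> x) \<le> x \<bullet> (Cm *v x)" for x unfolding Cm_def by (rule Cminus_facts(2)[OF ns p \<eta> dm])
  have eigCp: "\<tau>m \<le> l \<and> l \<le> Bv" if lin: "l \<in> eigvals Cp" for l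
  proof -
    obtain v where v: "v \<noteq> 0" "v \<bullet> (Cp *v v) = l * (v \<bullet> v)" using eig_quad[OF lin] by blast
    have vv: "v \<bullet> v > 0" using v(1) by simp
    have "\<tau>m * (v \<bullet> v) \<le> l * (v \<bullet> v)" "l * (v \<bullet> v) \<le> Bv * (v \<bullet> v)" using CpL[of v] CpU[of v] v(2) by simp_all
    then show ?thesis using vv by (simp add: mult_le_cancel_right)
  qed
  have eigCm: "\<tau>p \<le> l" if lin: "l \<in> eigvals Cm" for l
  proof -
    obtain v where v: "v \<noteq> 0" "v \<bullet> (Cm *v v) = l * (v \<bullet> v)" using eig_quad[OF lin] by blast
    have vv: "v \<bullet> v > 0" using v(1) by simp
    have "\<tau>p * (v \<bullet> v) \<le> l * (v \<bullet> v)" using CmL[of v] v(2) by simp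
    then show ?thesis using vv by (simp add: mult_le_cancel_right)
  qed
  define L where "L = lambda_max Cp"
  define m where "m = lambda_min Cm"
  have Lin: "L \<in> eigvals Cp" unfolding L_def lambda_max_def
    by (rule Max_in[OF eigvals_finite_ne[OF CpS]])
  have Lge: "l \<le> L" if "l \<in> eigvals Cp" for l unfolding L_def lambda_max_def
    by (rule Max_ge[OF eigvals_finite_ne(1)[OF CpS] that])
  have min: "m \<in> eigvals Cm" unfolding m_def lambda_min_def
    by (rule Min_in[OF eigvals_finite_ne[OF CmS]])
  have mle: "m \<le> l" if "l \<in> eigvals Cm" for l unfolding m_def lambda_min_def
    by (rule Min_le[OF eigvals_finite_ne(1)[OF CmS] that])
  have LB: "L \<le> Bv" and L0: "\<tau>m \<le> L" using eigCp[OF Lin] by auto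
  have mt: "\<tau>p \<le> m" using eigCm[OF min] .
  have mpos: "m > 0" using mt \<tau>p by simp
  have Cmpos: "\<forall>l\<in>eigvals Cm. l > 0" using eigCm \<tau>p by fastforce
  obtain B \<mu> where B: "onb B" "\<And>b. b \<in> B \<Longrightarrow> \<mu> b > 0" "Cm = opB B \<mu>"
    "pd_sqrt Cm = opB B (\<lambda>b. sqrt (\<mu> b))" "inv_sqrt Cm = opB B (\<lambda>b. 1 / sqrt (\<mu> b))"
    by (rule pd_sqrt_props[OF CmS Cmpos], rule that, assumption+)
  define R where "R = inv_sqrt Cm"
  have RS: "transpose R = R" unfolding R_def B(5) by (rule opB_sym[OF B(1)])
  have \<mu>m: "m \<le> \<mu> b" if "b \<in> B" for b
  proof -
    have "b \<noteq> 0" using B(1) that by (auto simp: onb_def)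
    moreover have "Cm *v b = \<mu> b *\<^sub>R b" unfolding B(3) by (rule opB_eig[OF B(1) that])
    ultimately have "\<mu> b \<in> eigvals Cm" by (auto simp: eigvals_def)
    then show ?thesis by (rule mle)
  qed
  have Rbound: "(R *v w) \<bullet> (R *v w) \<le> (w \<bullet> w) / m" for w
  proof -
    have "(R *v w) \<bullet> (R *v w) = (\<Sum>b\<in>B. ((R *v w) \<bullet> b) * ((R *v w) \<bullet> b))"
      by (rule onb_parseval[OF B(1)])
    also have "\<dots> = (\<Sum>b\<in>B. ((1 / sqrt (\<mu> b)) * (w \<bullet> b))^2)"
      by (rule sum.cong) (simp_all add: R_def B(5) opB_coef[OF B(1)] power2_eq_square)
    also have "\<dots> = (\<Sum>b\<in>B. (w \<bullet> b)^2 / \<mu> b)"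
      by (rule sum.cong) (simp_all add: power_mult_distrib power_divide less_imp_le[OF B(2)])
    also have "\<dots> \<le> (\<Sum>b\<in>B. (w \<bullet> b)^2 / m)"
      by (rule sum_mono, rule divide_left_mono) (simp_all add: \<mu>m mpos B(2))
    also have "\<dots> = (w \<bullet> w) / m"
      by (simp add: onb_parseval[OF B(1), of w w] sum_divide_distrib power2_eq_square)
    finally show ?thesis .
  qed
  define M where "M = R ** Cp ** R"
  have Mv: "M *v x = R *v (Cp *v (R *v x))" for x by (simp add: M_def matrix_vector_mul_assoc matrix_mul_assoc)
  have MS: "transpose M = M"
    unfolding M_def by (simp add: matrix_transpose_mul RS CpS matrix_mul_assoc)
  have eigM: "\<bar>l\<bar> \<le> L / m" if lin: "l \<in> eigvals M" for l
  proof -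
    obtain w where w: "w \<noteq> 0" "w \<bullet> (M *v w) = l * (w \<bullet> w)" using eig_quad[OF lin] by blast
    have ww: "w \<bullet> w > 0" using w(1) by simp
    define y where "y = R *v w"
    have "w \<bullet> (M *v w) = y \<bullet> (Cp *v y)" unfolding Mv y_def by (rule sym_inner[OF RS])
    moreover have "0 \<le> y \<bullet> (Cp *v y)" using CpL[of y] \<tau>m by (meson order_trans zero_le_mult_iff inner_ge_zero)
    moreover have "y \<bullet> (Cp *v y) \<le> L * (y \<bullet> y)" by (rule quad_upper[OF CpS Lge])
    moreover have "L * (y \<bullet> y) \<le> L * ((w \<bullet> w) / m)"
      using Rbound[of w] L0 \<tau>m unfolding y_def by (intro mult_left_mono) auto
    ultimately have "0 \<le> l * (w \<bullet> w)" "l * (w \<bullet> w) \<le> (L / m) * (w \<bullet> w)" using w(2) by simp_all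
    then have "0 \<le> l" "l \<le> L / m" using ww
      by (simp add: zero_le_mult_iff, intro mult_right_le_imp_le[of l "w \<bullet> w" "L / m"], simp_all)
    then show ?thesis by simp
  qed
  have spec: "spec_norm M \<le> L / m"
    unfolding spec_norm_def by (rule onorm_le, rule norm_bound_eig[OF MS eigM])
  have final: "L / m \<le> Bv / \<tau>p"
    using LB L0 \<tau>m mt \<tau>p by (intro frac_le) auto
  show ?thesis
    unfolding Let_def n_def[symmetric] s_def[symmetric] Bv_def[symmetric] Cp_def[symmetric] Cm_def[symmetric]
      L_def[symmetric] m_def[symmetric] R_def[symmetric] M_def[symmetric]
    using LB mt spec final by blast
qed

end
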